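(* Let $\mathcal U\subset Q\times Q$ be a symmetric $D$-type subset and let $s_R:\mathcal U''\to\mathcal U/G$ be a semi-local right splitting of the discrete Atiyah sequence in the category of fiber bundles with a section over $Q/G$, i.e. a smooth map with $F_2\circ s_R=\mathrm{id}_{\mathcal U''}$ and $s_R(\pi(q),\pi(q))=[q,q]$ for all $q$. Let $\mathcal A_d:\mathcal U\to G$ be the discrete connection form associated with $s_R$, i.e. the unique smooth $\mathcal A_d$ with $\mathcal A_d(l^Q_{g_0}(q_0),l^Q_{g_1}(q_1))=g_1\mathcal A_d(q_0,q_1)g_0^{-1}$, $\mathcal A_d(q,q)=e$, and $s_R(\pi(q_0),\pi(q_1))=[q_0,l^Q_{\mathcal A_d(q_0,q_1)^{-1}}(q_1)]$ for all $(q_0,q_1)\in\mathcal U$. Then $s_R$ is a morphism of local Lie groupoids from $\mathcal U''$ to $\mathcal U/G$ if and only if $\mathcal A_d$ is flat.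
   Context: $G$ is a Lie group acting freely and properly on the left on $Q$ by $l^Q$; $\pi:Q\to Q/G$ is the quotient; $[q_0,q_1]$ denotes the class in $(Q\times Q)/G$ of the diagonal action, and $F_2([q_0,q_1])=(\pi(q_0),\pi(q_1))$. $\mathcal V_d=\{(q,l^Q_g(q))\}$. An open $\mathcal U\subset Q\times Q$ is of $D$-type if it contains $\mathcal V_d$ and is invariant under $(g_0,g_1)\cdot(q_0,q_1)=(l^Q_{g_0}(q_0),l^Q_{g_1}(q_1))$; symmetric if invariant under $(q_0,q_1)\mapsto(q_1,q_0)$. $\mathcal U''=(\pi\times\pi)(\mathcal U)$. Local Lie groupoid over $M$: manifold $G$, submersions $\alpha,\beta:G\to M$, diffeomorphism $i$ ($g\mapsto g^{-1}$), smooth $\epsilon:M\to G$, smooth $m:G_m\to G$ ($(g_1,g_2)\mapsto g_1g_2$) on an open $G_m\subset G_2=\{(g_1,g_2):\beta(g_1)=\alpha(g_2)\}$, with: $\alpha\epsilon=\beta\epsilon=\mathrm{id}$; $(g_1,g_2)\in G_m\Rightarrow(g_2^{-1},g_1^{-1})\in G_m$ and $(g_1g_2)^{-1}=g_2^{-1}g_1^{-1}$; $(\epsilon\alpha(g),g),(g,\epsilon\beta(g))\in G_m$ and $\epsilon\alpha(g)g=g=g\epsilon\beta(g)$; $(g,g^{-1}),(g^{-1},g)\in G_m$, $gg^{-1}=\epsilon\alpha(g)$, $g^{-1}g=\epsilon\beta(g)$; if $(g_1,g_2),(g_2,g_3),(g_1,g_2g_3)\in G_m$ then $(g_1g_2,g_3)\in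 G_m$ and $(g_1g_2)g_3=g_1(g_2g_3)$. A morphism $F:G\to G'$ of local Lie groupoids is smooth with $F(\epsilon(M))\subset\epsilon'(M')$ and, for $(g_1,g_2)\in G_m$, $(F(g_1),F(g_2))\in G'_m$ and $F(g_1g_2)=F(g_1)F(g_2)$. If $\Gamma$ is a Lie groupoid and $U\subset\Gamma$ open with $U^{-1}\subset U$, $\epsilon(M)\subset U$, then $U$ is a local Lie groupoid with restricted structure maps and $U_m=U_2\cap m^{-1}(U)$. Here $\mathcal U''$ carries this structure as an open subset of the pair groupoid $(Q/G)\times(Q/G)$ (source/target the projections, $(r_0,r_1)(r_1,r_2)=(r_0,r_2)$), and $\mathcal U/G$ as an open subset of the Atiyah groupoid $(Q\times Q)/G$ (source $[q_0,q_1]\mapsto\pi(q_0)$, target $\pi(q_1)$, $[q_0,q_1][q_1,q_2]=[q_0,q_2]$, unit $[q,q]$, inverse $[q_1,q_0]$). Flatness: with $\mathcal U^{(3)}=\{(q_0,q_1,q_2):(q_i,q_j)\in\mathcal U\ \forall i,j\}$, the discrete curvature is $\mathcal B_d(q_0,q_1,q_2)=\mathcal A_d(q_0,q_2)^{-1}\mathcal A_d(q_1,q_2)\mathcal A_d(q_0,q_1)$, and $\mathcal A_d$ is flat if $\mathcal B_d\equiv e$ on $\mathcal U^{(3)}$. *)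

theory Defs
  imports "HOL-Algebra.Group" "HOL-Analysis.Analysis"
begin

definition free_left_action :: "('g, 'b) monoid_scheme \<Rightarrow> ('g \<Rightarrow> 'q \<Rightarrow> 'q) \<Rightarrow> bool" where
  "free_left_action G act \<longleftrightarrow> group G
     \<and> (\<forall>q. act \<one>\<^bsub>G\<^esub> q = q)
     \<and> (\<forall>g\<in>carrier G. \<forall>h\<in>carrier G. \<forall>q. act (g \<otimes>\<^bsub>G\<^esub> h) q = act g (act h q))
     \<and> (\<forall>g\<in>carrier G. \<forall>q. act g q = q \<longrightarrow> g = \<one>\<^bsub>G\<^esub>)"

text \<open>The quotient map \<pi> : Q \<rightarrow> Q/G; an element of Q/G is a G-orbit.\<close>
definition orb :: "('g, 'b) monoid_scheme \<Rightarrow> ('g \<Rightarrow> 'q \<Rightarrow> 'q) \<Rightarrow> 'q \<Rightarrow> 'q set" where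
  "orb G act q = {act g q | g. g \<in> carrier G}"

definition aclass :: "('g, 'b) monoid_scheme \<Rightarrow> ('g \<Rightarrow> 'q \<Rightarrow> 'q) \<Rightarrow> 'q \<Rightarrow> 'q \<Rightarrow> ('q \<times> 'q) set" where
  "aclass G act q0 q1 = {(act g q0, act g q1) | g. g \<in> carrier G}"

definition F2 :: "('g, 'b) monoid_scheme \<Rightarrow> ('g \<Rightarrow> 'q \<Rightarrow> 'q) \<Rightarrow> ('q \<times> 'q) set \<Rightarrow> 'q set \<times> 'q set" where
  "F2 G act c = (SOME r. \<exists>q0 q1. c = aclass G act q0 q1 \<and> r = (orb G act q0, orb G act q1))"

definition Vd :: "('g, 'b) monoid_scheme \<Rightarrow> ('g \<Rightarrow> 'q \<Rightarrow> 'q) \<Rightarrow> ('q \<times> 'q) set" where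
  "Vd G act = {(q, act g q) | q g. g \<in> carrier G}"

definition D_type :: "('g, 'b) monoid_scheme \<Rightarrow> ('g \<Rightarrow> 'q \<Rightarrow> 'q) \<Rightarrow> ('q::topological_space \<times> 'q) set \<Rightarrow> bool" where
  "D_type G act U \<longleftrightarrow> open U \<and> Vd G act \<subseteq> U
     \<and> (\<forall>(q0,q1)\<in>U. \<forall>g0\<in>carrier G. \<forall>g1\<in>carrier G. (act g0 q0, act g1 q1) \<in> U)"

definition symmetric_set :: "('q \<times> 'q) set \<Rightarrow> bool" where
  "symmetric_set U \<longleftrightarrow> (\<forall>(q0,q1)\<in>U. (q1,q0) \<in> U)"

definition Upp :: "('g, 'b) monoid_scheme \<Rightarrow> ('g \<Rightarrow> 'q \<Rightarrow> 'q) \<Rightarrow> ('q \<times> 'q) set \<Rightarrow> ('q set \<times> 'q set) set" where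
  "Upp G act U = (\<lambda>(q0,q1). (orb G act q0, orb G act q1)) ` U"

definition UmodG :: "('g, 'b) monoid_scheme \<Rightarrow> ('g \<Rightarrow> 'q \<Rightarrow> 'q) \<Rightarrow> ('q \<times> 'q) set \<Rightarrow> ('q \<times> 'q) set set" where
  "UmodG G act U = (\<lambda>(q0,q1). aclass G act q0 q1) ` U"

record ('a, 'm) lgpd =
  lg_carrier :: "'a set"
  lg_base :: "'m set"
  lg_src :: "'a \<Rightarrow> 'm"
  lg_tgt :: "'a \<Rightarrow> 'm"
  lg_unit :: "'m \<Rightarrow> 'a"
  lg_inv :: "'a \<Rightarrow> 'a"
  lg_mult :: "'a \<Rightarrow> 'a \<Rightarrow> 'a"
  lg_dom :: "('a \<times> 'a) set"

text \<open>Morphism of local groupoids (smoothness not expressible).\<close>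
definition lg_morphism :: "('a, 'm) lgpd \<Rightarrow> ('b, 'n) lgpd \<Rightarrow> ('a \<Rightarrow> 'b) \<Rightarrow> bool" where
  "lg_morphism A B F \<longleftrightarrow>
     F ` lg_carrier A \<subseteq> lg_carrier B
   \<and> F ` (lg_unit A ` lg_base A) \<subseteq> lg_unit B ` lg_base B
   \<and> (\<forall>(g1,g2)\<in>lg_dom A. (F g1, F g2) \<in> lg_dom B
        \<and> F (lg_mult A g1 g2) = lg_mult B (F g1) (F g2))"

text \<open>The open subset U'' of the pair groupoid (Q/G) x (Q/G) as a local groupoid:
  U_m = U_2 \<inter> m^{-1}(U).\<close>
definition pair_lgpd :: "'m set \<Rightarrow> ('m \<times> 'm) set \<Rightarrow> ('m \<times> 'm, 'm) lgpd" where
  "pair_lgpd M V = \<lparr> lg_carrier = V, lg_base = M, lg_src = fst, lg_tgt = snd,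
     lg_unit = (\<lambda>r. (r, r)), lg_inv = (\<lambda>(r0,r1). (r1,r0)),
     lg_mult = (\<lambda>(r0,r1) (r1',r2). (r0,r2)),
     lg_dom = {((r0,r1),(r1',r2)). (r0,r1) \<in> V \<and> (r1',r2) \<in> V \<and> r1 = r1' \<and> (r0,r2) \<in> V} \<rparr>"

definition atiyah_src :: "('g, 'b) monoid_scheme \<Rightarrow> ('g \<Rightarrow> 'q \<Rightarrow> 'q) \<Rightarrow> ('q \<times> 'q) set \<Rightarrow> 'q set" where
  "atiyah_src G act c = fst (F2 G act c)"

definition atiyah_tgt :: "('g, 'b) monoid_scheme \<Rightarrow> ('g \<Rightarrow> 'q \<Rightarrow> 'q) \<Rightarrow> ('q \<times> 'q) set \<Rightarrow> 'q set" where
  "atiyah_tgt G act c = snd (F2 G act c)"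

definition atiyah_inv :: "('g, 'b) monoid_scheme \<Rightarrow> ('g \<Rightarrow> 'q \<Rightarrow> 'q) \<Rightarrow> ('q \<times> 'q) set \<Rightarrow> ('q \<times> 'q) set" where
  "atiyah_inv G act c = (SOME c'. \<exists>q0 q1. c = aclass G act q0 q1 \<and> c' = aclass G act q1 q0)"

definition atiyah_mult :: "('g, 'b) monoid_scheme \<Rightarrow> ('g \<Rightarrow> 'q \<Rightarrow> 'q) \<Rightarrow> ('q \<times> 'q) set \<Rightarrow> ('q \<times> 'q) set \<Rightarrow> ('q \<times> 'q) set" where
  "atiyah_mult G act c1 c2 = (SOME c. \<exists>q0 q1 q2. c1 = aclass G act q0 q1 \<and> c2 = aclass G act q1 q2
        \<and> c = aclass G act q0 q2)"

definition atiyah_lgpd :: "('g, 'b) monoid_scheme \<Rightarrow> ('g \<Rightarrow> 'q \<Rightarrow> 'q) \<Rightarrow> ('q \<times> 'q) set set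
      \<Rightarrow> (('q \<times> 'q) set, 'q set) lgpd" where
  "atiyah_lgpd G act W = \<lparr> lg_carrier = W, lg_base = range (orb G act),
     lg_src = atiyah_src G act, lg_tgt = atiyah_tgt G act,
     lg_unit = (\<lambda>r. SOME c. \<exists>q. r = orb G act q \<and> c = aclass G act q q),
     lg_inv = atiyah_inv G act,
     lg_mult = atiyah_mult G act,
     lg_dom = {(c1,c2). c1 \<in> W \<and> c2 \<in> W \<and> atiyah_tgt G act c1 = atiyah_src G act c2
                \<and> atiyah_mult G act c1 c2 \<in> W} \<rparr>"

definition U3 :: "('q \<times> 'q) set \<Rightarrow> ('q \<times> 'q \<times> 'q) set" where
  "U3 U = {(q0,q1,q2). (q0,q0) \<in> U \<and> (q0,q1) \<in> U \<and> (q0,q2) \<in> U \<and> (q1,q0) \<in> U \<and> (q1,q1) \<in> U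
      \<and> (q1,q2) \<in> U \<and> (q2,q0) \<in> U \<and> (q2,q1) \<in> U \<and> (q2,q2) \<in> U}"

definition discrete_curvature :: "('g, 'b) monoid_scheme \<Rightarrow> ('q \<Rightarrow> 'q \<Rightarrow> 'g) \<Rightarrow> 'q \<Rightarrow> 'q \<Rightarrow> 'q \<Rightarrow> 'g" where
  "discrete_curvature G Ad q0 q1 q2 = inv\<^bsub>G\<^esub> (Ad q0 q2) \<otimes>\<^bsub>G\<^esub> Ad q1 q2 \<otimes>\<^bsub>G\<^esub> Ad q0 q1"

definition flat :: "('g, 'b) monoid_scheme \<Rightarrow> ('q \<times> 'q) set \<Rightarrow> ('q \<Rightarrow> 'q \<Rightarrow> 'g) \<Rightarrow> bool" where
  "flat G U Ad \<longleftrightarrow> (\<forall>(q0,q1,q2)\<in>U3 U. discrete_curvature G Ad q0 q1 q2 = \<one>\<^bsub>G\<^esub>)"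

end

theory Submission
  imports Defs
begin

context
  fixes G :: "('g, 'b) monoid_scheme" (structure) and act :: "'g \<Rightarrow> 'q::topological_space \<Rightarrow> 'q"
  assumes fa: "free_left_action G act"
begin

lemma grp: "group G" using fa unfolding free_left_action_def by blast

lemma act_one: "act \<one>\<^bsub>G\<^esub> q = q" using fa unfolding free_left_action_def by blast

lemma act_mult: "g \<in> carrier G \<Longrightarrow> h \<in> carrier G \<Longrightarrow> act (g \<otimes>\<^bsub>G\<^esub> h) q = act g (act h q)"
  using fa unfolding free_left_action_def by blast

lemma act_free: "g \<in> carrier G \<Longrightarrow> act g q = q \<Longrightarrow> g = \<one>\<^bsub>G\<^esub>"
  using fa unfolding free_left_action_def by blast

lemma act_inj: assumes g: "g \<in> carrier G" and h: "h \<in> carrier G" and e: "act g a = act h a"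
  shows "g = h"
proof -
  interpret group G by (rule grp)
  have "act (inv h \<otimes> g) a = act (inv h) (act g a)" using g h by (simp add: act_mult)
  also have "\<dots> = act (inv h) (act h a)" using e by simp
  also have "\<dots> = a" using h by (simp add: act_mult[symmetric] act_one)
  finally have "act (inv h \<otimes> g) a = a" .
  hence "inv h \<otimes> g = \<one>" using g h by (intro act_free) auto
  moreover have "g = h \<otimes> (inv h \<otimes> g)" using g h by (simp add: m_assoc[symmetric])
  ultimately show ?thesis using h by simp
qed

lemma act_inv_cancel: "g \<in> carrier G \<Longrightarrow> act (inv\<^bsub>G\<^esub> g) (act g a) = a"
proof -
  assume g: "g \<in> carrier G"
  interpret group G by (rule grp)
  show ?thesis using g by (simp add: act_mult[symmetric] act_one)
qed

lemma in_orb: "q \<in> orb G act q"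
proof -
  interpret group G by (rule grp)
  show ?thesis unfolding orb_def
  proof (rule CollectI, intro exI conjI)
    show "q = act \<one> q" by (simp add: act_one)
  qed simp
qed

lemma orb_eq: "orb G act a = orb G act b \<longleftrightarrow> (\<exists>g\<in>carrier G. a = act g b)"
proof
  assume "orb G act a = orb G act b"
  hence "a \<in> orb G act b" using in_orb[of a] by simp
  thus "\<exists>g\<in>carrier G. a = act g b" unfolding orb_def by blast
next
  interpret group G by (rule grp)
  assume "\<exists>g\<in>carrier G. a = act g b"
  then obtain g where g: "g \<in> carrier G" "a = act g b" by blast
  show "orb G act a = orb G act b"
  proof
    show "orb G act a \<subseteq> orb G act b" unfolding orb_def using g
    proof (clarsimp)
      fix h assume h: "h \<in> carrier G"
      have "act h (act g b) = act (h \<otimes> g) b" using g h by (simp add: act_mult)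
      thus "\<exists>k. act h (act g b) = act k b \<and> k \<in> carrier G" using g h by blast
    qed
    show "orb G act b \<subseteq> orb G act a" unfolding orb_def using g
    proof (clarsimp)
      fix h assume h: "h \<in> carrier G"
      have "act h b = act (h \<otimes> inv g) (act g b)" using g h by (simp add: act_mult act_inv_cancel)
      thus "\<exists>k. act h b = act k (act g b) \<and> k \<in> carrier G" using g h by blast
    qed
  qed
qed

lemma aclass_eq: "aclass G act a b = aclass G act a' b' \<longleftrightarrow> (\<exists>g\<in>carrier G. a' = act g a \<and> b' = act g b)"
proof
  interpret group G by (rule grp)
  assume "aclass G act a b = aclass G act a' b'"
  moreover have "(a', b') \<in> aclass G act a' b'" unfolding aclass_def
  proof (rule CollectI, intro exI conjI)
    show "(a', b') = (act \<one> a', act \<one> b')" by (simp add: act_one)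
  qed simp
  ultimately have "(a', b') \<in> aclass G act a b" by simp
  thus "\<exists>g\<in>carrier G. a' = act g a \<and> b' = act g b" unfolding aclass_def by auto
next
  interpret group G by (rule grp)
  assume "\<exists>g\<in>carrier G. a' = act g a \<and> b' = act g b"
  then obtain g where g: "g \<in> carrier G" "a' = act g a" "b' = act g b" by blast
  show "aclass G act a b = aclass G act a' b'"
  proof
    show "aclass G act a' b' \<subseteq> aclass G act a b" unfolding aclass_def using g
    proof (clarsimp)
      fix h assume h: "h \<in> carrier G"
      have 1: "act h (act g a) = act (h \<otimes> g) a" using g h by (simp add: act_mult)
      have 2: "act h (act g b) = act (h \<otimes> g) b" using g h by (simp add: act_mult)
      show "\<exists>k. act h (act g a) = act k a \<and> act h (act g b) = act k b \<and> k \<in> carrier G"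
        using 1 2 g h by blast
    qed
    show "aclass G act a b \<subseteq> aclass G act a' b'" unfolding aclass_def using g
    proof (clarsimp)
      fix h assume h: "h \<in> carrier G"
      have 1: "act h a = act (h \<otimes> inv g) (act g a)" using g h by (simp add: act_mult act_inv_cancel)
      have 2: "act h b = act (h \<otimes> inv g) (act g b)" using g h by (simp add: act_mult act_inv_cancel)
      show "\<exists>k. act h a = act k (act g a) \<and> act h b = act k (act g b) \<and> k \<in> carrier G"
        using 1 2 g h by blast
    qed
  qed
qed

lemma aclass_same_fst: "aclass G act a x = aclass G act a y \<Longrightarrow> x = y"
proof -
  interpret group G by (rule grp)
  assume "aclass G act a x = aclass G act a y"
  then obtain g where g: "g \<in> carrier G" "a = act g a" "y = act g x" using aclass_eq by blast
  have "g = \<one>" using g act_free by metis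
  thus ?thesis using g act_one by simp
qed

lemma aclass_shift: "g \<in> carrier G \<Longrightarrow> aclass G act a b = aclass G act (act g a) (act g b)"
  using aclass_eq by blast

lemma F2_aclass: "F2 G act (aclass G act a b) = (orb G act a, orb G act b)"
proof -
  have U: "\<exists>q0 q1. aclass G act a b = aclass G act q0 q1 \<and> r = (orb G act q0, orb G act q1)
        \<Longrightarrow> r = (orb G act a, orb G act b)" for r
  proof -
    assume "\<exists>q0 q1. aclass G act a b = aclass G act q0 q1 \<and> r = (orb G act q0, orb G act q1)"
    then obtain q0 q1 where e: "aclass G act a b = aclass G act q0 q1" "r = (orb G act q0, orb G act q1)" by blast
    then obtain g where "g \<in> carrier G" "q0 = act g a" "q1 = act g b" using aclass_eq by blast
    thus ?thesis using e orb_eq by auto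
  qed
  show ?thesis unfolding F2_def
    apply (rule some_equality)
     apply (rule exI[of _ a], rule exI[of _ b], simp)
    by (rule U)
qed

lemma mult_aclass: "atiyah_mult G act (aclass G act a b) (aclass G act b c) = aclass G act a c"
proof -
  have U: "\<exists>q0 q1 q2. aclass G act a b = aclass G act q0 q1 \<and> aclass G act b c = aclass G act q1 q2
        \<and> x = aclass G act q0 q2 \<Longrightarrow> x = aclass G act a c" for x
  proof -
    assume "\<exists>q0 q1 q2. aclass G act a b = aclass G act q0 q1 \<and> aclass G act b c = aclass G act q1 q2
        \<and> x = aclass G act q0 q2"
    then obtain q0 q1 q2 where e: "aclass G act a b = aclass G act q0 q1"
      "aclass G act b c = aclass G act q1 q2" "x = aclass G act q0 q2" by blast
    obtain g where g: "g \<in> carrier G" "q0 = act g a" "q1 = act g b" using e(1) aclass_eq by blast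
    obtain h where h: "h \<in> carrier G" "q1 = act h b" "q2 = act h c" using e(2) aclass_eq by blast
    have "g = h" using g h act_inj by metis
    thus ?thesis using e g h aclass_eq by metis
  qed
  show ?thesis unfolding atiyah_mult_def
    apply (rule some_equality)
     apply (rule exI[of _ a], rule exI[of _ b], rule exI[of _ c], simp)
    by (rule U)
qed

lemma Upp_mem:
  assumes D: "D_type G act U"
  shows "(orb G act a, orb G act b) \<in> Upp G act U \<longleftrightarrow> (a, b) \<in> U"
proof
  assume "(orb G act a, orb G act b) \<in> Upp G act U"
  then obtain q0 q1 where q: "(q0,q1) \<in> U" "orb G act a = orb G act q0" "orb G act b = orb G act q1"
    unfolding Upp_def by auto
  then obtain g h where "g \<in> carrier G" "h \<in> carrier G" "a = act g q0" "b = act h q1"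
    using orb_eq by metis
  thus "(a,b) \<in> U" using q D unfolding D_type_def by blast
qed (auto simp: Upp_def)

end

theorem proposition5p20:
  fixes G :: "('g, 'b) monoid_scheme"
    and act :: "'g \<Rightarrow> 'q::topological_space \<Rightarrow> 'q"
    and U :: "('q \<times> 'q) set"
    and sR :: "'q set \<times> 'q set \<Rightarrow> ('q \<times> 'q) set"
    and Ad :: "'q \<Rightarrow> 'q \<Rightarrow> 'g"
  assumes act: "free_left_action G act"
    and Dtype: "D_type G act U"
    and sym: "symmetric_set U"
    and sR_into: "\<forall>r\<in>Upp G act U. sR r \<in> UmodG G act U"
    and sR_split: "\<forall>r\<in>Upp G act U. F2 G act (sR r) = r"
    and sR_unit: "\<forall>q. sR (orb G act q, orb G act q) = aclass G act q q"
    and Ad_closed: "\<forall>(q0,q1)\<in>U. Ad q0 q1 \<in> carrier G"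
    and Ad_equiv: "\<forall>(q0,q1)\<in>U. \<forall>g0\<in>carrier G. \<forall>g1\<in>carrier G.
        Ad (act g0 q0) (act g1 q1) = g1 \<otimes>\<^bsub>G\<^esub> Ad q0 q1 \<otimes>\<^bsub>G\<^esub> inv\<^bsub>G\<^esub> g0"
    and Ad_diag: "\<forall>q. Ad q q = \<one>\<^bsub>G\<^esub>"
    and Ad_sR: "\<forall>(q0,q1)\<in>U.
        sR (orb G act q0, orb G act q1) = aclass G act q0 (act (inv\<^bsub>G\<^esub> (Ad q0 q1)) q1)"
  shows "lg_morphism (pair_lgpd (range (orb G act)) (Upp G act U)) (atiyah_lgpd G act (UmodG G act U)) sR
         \<longleftrightarrow> flat G U Ad"
proof -
  interpret group G by (rule grp[OF act])
  have K: "sR (orb G act q0, orb G act q2) = atiyah_mult G act (sR (orb G act q0, orb G act q1)) (sR (orb G act q1, orb G act q2))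
      \<longleftrightarrow> discrete_curvature G Ad q0 q1 q2 = \<one>\<^bsub>G\<^esub>"
    if u: "(q0,q1) \<in> U" "(q1,q2) \<in> U" "(q0,q2) \<in> U" for q0 q1 q2
  proof -
    define a01 where "a01 = Ad q0 q1"
    define a12 where "a12 = Ad q1 q2"
    define a02 where "a02 = Ad q0 q2"
    have c: "a01 \<in> carrier G" "a12 \<in> carrier G" "a02 \<in> carrier G"
      using u Ad_closed unfolding a01_def a12_def a02_def by auto
    have s01: "sR (orb G act q0, orb G act q1) = aclass G act q0 (act (inv\<^bsub>G\<^esub> a01) q1)"
      using u Ad_sR unfolding a01_def by auto
    have "sR (orb G act q1, orb G act q2) = aclass G act q1 (act (inv\<^bsub>G\<^esub> a12) q2)"
      using u Ad_sR unfolding a12_def by auto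
    also have "\<dots> = aclass G act (act (inv\<^bsub>G\<^esub> a01) q1) (act (inv\<^bsub>G\<^esub> a01) (act (inv\<^bsub>G\<^esub> a12) q2))"
      using aclass_shift[OF act, of "inv\<^bsub>G\<^esub> a01"] c by auto
    finally have s12: "sR (orb G act q1, orb G act q2) = aclass G act (act (inv\<^bsub>G\<^esub> a01) q1) (act (inv\<^bsub>G\<^esub> a01 \<otimes>\<^bsub>G\<^esub> inv\<^bsub>G\<^esub> a12) q2)"
      using c by (simp add: act_mult[OF act])
    have s02: "sR (orb G act q0, orb G act q2) = aclass G act q0 (act (inv\<^bsub>G\<^esub> a02) q2)"
      using u Ad_sR unfolding a02_def by auto
    have "?thesis \<longleftrightarrow> (aclass G act q0 (act (inv\<^bsub>G\<^esub> a02) q2) = aclass G act q0 (act (inv\<^bsub>G\<^esub> a01 \<otimes>\<^bsub>G\<^esub> inv\<^bsub>G\<^esub> a12) q2)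
        \<longleftrightarrow> inv\<^bsub>G\<^esub> a02 \<otimes>\<^bsub>G\<^esub> a12 \<otimes>\<^bsub>G\<^esub> a01 = \<one>\<^bsub>G\<^esub>)"
      unfolding s01 s12 s02 mult_aclass[OF act] discrete_curvature_def a01_def a12_def a02_def by simp
    moreover have "aclass G act q0 (act (inv\<^bsub>G\<^esub> a02) q2) = aclass G act q0 (act (inv\<^bsub>G\<^esub> a01 \<otimes>\<^bsub>G\<^esub> inv\<^bsub>G\<^esub> a12) q2)
        \<longleftrightarrow> inv\<^bsub>G\<^esub> a02 = inv\<^bsub>G\<^esub> a01 \<otimes>\<^bsub>G\<^esub> inv\<^bsub>G\<^esub> a12"
    proof -
      have i1: "inv\<^bsub>G\<^esub> a02 \<in> carrier G" "inv\<^bsub>G\<^esub> a01 \<otimes>\<^bsub>G\<^esub> inv\<^bsub>G\<^esub> a12 \<in> carrier G" using c by auto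
      show ?thesis
      proof
        assume "aclass G act q0 (act (inv\<^bsub>G\<^esub> a02) q2) = aclass G act q0 (act (inv\<^bsub>G\<^esub> a01 \<otimes>\<^bsub>G\<^esub> inv\<^bsub>G\<^esub> a12) q2)"
        hence "act (inv\<^bsub>G\<^esub> a02) q2 = act (inv\<^bsub>G\<^esub> a01 \<otimes>\<^bsub>G\<^esub> inv\<^bsub>G\<^esub> a12) q2" by (rule aclass_same_fst[OF act])
        thus "inv\<^bsub>G\<^esub> a02 = inv\<^bsub>G\<^esub> a01 \<otimes>\<^bsub>G\<^esub> inv\<^bsub>G\<^esub> a12" using act_inj[OF act i1] by blast
      qed simp
    qed
    moreover have "inv\<^bsub>G\<^esub> a02 = inv\<^bsub>G\<^esub> a01 \<otimes>\<^bsub>G\<^esub> inv\<^bsub>G\<^esub> a12 \<longleftrightarrow> inv\<^bsub>G\<^esub> a02 \<otimes>\<^bsub>G\<^esub> a12 \<otimes>\<^bsub>G\<^esub> a01 = \<one>\<^bsub>G\<^esub>"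
    proof -
      have "inv\<^bsub>G\<^esub> a01 \<otimes>\<^bsub>G\<^esub> inv\<^bsub>G\<^esub> a12 = inv\<^bsub>G\<^esub> (a12 \<otimes>\<^bsub>G\<^esub> a01)" using c by (simp add: inv_mult_group)
      hence "inv\<^bsub>G\<^esub> a02 = inv\<^bsub>G\<^esub> a01 \<otimes>\<^bsub>G\<^esub> inv\<^bsub>G\<^esub> a12 \<longleftrightarrow> a02 = a12 \<otimes>\<^bsub>G\<^esub> a01" using c
        by (metis inv_inv m_closed)
      also have "\<dots> \<longleftrightarrow> inv\<^bsub>G\<^esub> a02 \<otimes>\<^bsub>G\<^esub> (a12 \<otimes>\<^bsub>G\<^esub> a01) = \<one>\<^bsub>G\<^esub>" using c
        by (metis inv_equality inv_inv inv_closed m_closed r_inv)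
      finally show ?thesis using c by (simp add: m_assoc)
    qed
    ultimately show ?thesis by blast
  qed
  have diag: "(q,q) \<in> U" for q
  proof -
    have "(q, act \<one>\<^bsub>G\<^esub> q) \<in> Vd G act" unfolding Vd_def by blast
    thus ?thesis using Dtype act_one[OF act] unfolding D_type_def by auto
  qed
  have symU: "(a,b) \<in> U \<Longrightarrow> (b,a) \<in> U" for a b using sym unfolding symmetric_set_def by auto
  have U3I: "(q0,q1,q2) \<in> U3 U" if "(q0,q1) \<in> U" "(q1,q2) \<in> U" "(q0,q2) \<in> U" for q0 q1 q2
    using that diag symU unfolding U3_def by auto
  have Upp_m: "(orb G act a, orb G act b) \<in> Upp G act U \<longleftrightarrow> (a,b) \<in> U" for a b
    using Upp_mem[OF act Dtype] .
  have Upp_rep: "r \<in> Upp G act U \<Longrightarrow> \<exists>a b. r = (orb G act a, orb G act b) \<and> (a,b) \<in> U" for r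
    unfolding Upp_def by auto
  show ?thesis
  proof
    assume m: "lg_morphism (pair_lgpd (range (orb G act)) (Upp G act U)) (atiyah_lgpd G act (UmodG G act U)) sR"
    show "flat G U Ad" unfolding flat_def
    proof (clarify)
      fix q0 q1 q2 assume "(q0,q1,q2) \<in> U3 U"
      hence u: "(q0,q1) \<in> U" "(q1,q2) \<in> U" "(q0,q2) \<in> U" unfolding U3_def by auto
      have "((orb G act q0, orb G act q1), (orb G act q1, orb G act q2))
          \<in> lg_dom (pair_lgpd (range (orb G act)) (Upp G act U))"
        using u Upp_m unfolding pair_lgpd_def by auto
      moreover have "\<forall>(g1,g2)\<in>lg_dom (pair_lgpd (range (orb G act)) (Upp G act U)).
          sR (lg_mult (pair_lgpd (range (orb G act)) (Upp G act U)) g1 g2)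
          = lg_mult (atiyah_lgpd G act (UmodG G act U)) (sR g1) (sR g2)"
        using m unfolding lg_morphism_def by blast
      ultimately have "sR (lg_mult (pair_lgpd (range (orb G act)) (Upp G act U)) (orb G act q0, orb G act q1) (orb G act q1, orb G act q2))
          = lg_mult (atiyah_lgpd G act (UmodG G act U)) (sR (orb G act q0, orb G act q1)) (sR (orb G act q1, orb G act q2))"
        by blast
      hence "sR (orb G act q0, orb G act q2) = atiyah_mult G act (sR (orb G act q0, orb G act q1)) (sR (orb G act q1, orb G act q2))"
        by (simp add: pair_lgpd_def atiyah_lgpd_def)
      thus "discrete_curvature G Ad q0 q1 q2 = \<one>\<^bsub>G\<^esub>" using K u by blast
    qed
  next
    assume f: "flat G U Ad"
    show "lg_morphism (pair_lgpd (range (orb G act)) (Upp G act U)) (atiyah_lgpd G act (UmodG G act U)) sR"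
      unfolding lg_morphism_def
    proof (intro conjI)
      show "sR ` lg_carrier (pair_lgpd (range (orb G act)) (Upp G act U)) \<subseteq> lg_carrier (atiyah_lgpd G act (UmodG G act U))"
        using sR_into by (simp add: pair_lgpd_def atiyah_lgpd_def image_subset_iff)
    next
      have that_unit: "aclass G act q q = (SOME c. \<exists>q'. orb G act q = orb G act q' \<and> c = aclass G act q' q')" for q
      proof (rule HOL.sym, rule some_equality)
        show "\<exists>q'. orb G act q = orb G act q' \<and> aclass G act q q = aclass G act q' q'" by blast
      next
        fix c assume "\<exists>q'. orb G act q = orb G act q' \<and> c = aclass G act q' q'"
        then obtain q' where "orb G act q = orb G act q'" "c = aclass G act q' q'" by blast
        then obtain g where g: "g \<in> carrier G" "q = act g q'" "c = aclass G act q' q'" using orb_eq[OF act] by blast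
        have "aclass G act q' q' = aclass G act (act g q') (act g q')" by (rule aclass_shift[OF act g(1)])
        thus "c = aclass G act q q" using g by simp
      qed
      show "sR ` lg_unit (pair_lgpd (range (orb G act)) (Upp G act U)) ` lg_base (pair_lgpd (range (orb G act)) (Upp G act U))
          \<subseteq> lg_unit (atiyah_lgpd G act (UmodG G act U)) ` lg_base (atiyah_lgpd G act (UmodG G act U))"
      proof (unfold pair_lgpd_def atiyah_lgpd_def lgpd.simps, rule subsetI)
        fix x assume "x \<in> sR ` (\<lambda>r. (r, r)) ` range (orb G act)"
        then obtain q where x: "x = sR (orb G act q, orb G act q)" by blast
        have "x = (SOME c. \<exists>q'. orb G act q = orb G act q' \<and> c = aclass G act q' q')"
          unfolding x by (rule trans[OF spec[OF sR_unit] that_unit])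
        thus "x \<in> (\<lambda>r. SOME c. \<exists>q. r = orb G act q \<and> c = aclass G act q q) ` range (orb G act)"
          by blast
      qed
    next
      show "\<forall>(g1, g2)\<in>lg_dom (pair_lgpd (range (orb G act)) (Upp G act U)).
         (sR g1, sR g2) \<in> lg_dom (atiyah_lgpd G act (UmodG G act U)) \<and>
         sR (lg_mult (pair_lgpd (range (orb G act)) (Upp G act U)) g1 g2) =
         lg_mult (atiyah_lgpd G act (UmodG G act U)) (sR g1) (sR g2)"
      proof (rule ballI)
        fix p assume "p \<in> lg_dom (pair_lgpd (range (orb G act)) (Upp G act U))"
        then obtain r0 r1 r2 where p: "p = ((r0,r1),(r1,r2))" and
          v: "(r0, r1) \<in> Upp G act U" "(r1, r2) \<in> Upp G act U" "(r0, r2) \<in> Upp G act U"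
          by (auto simp: pair_lgpd_def)
        obtain a b where ab: "(r0,r1) = (orb G act a, orb G act b)" "(a,b) \<in> U" using Upp_rep[OF v(1)] by blast
        obtain b' c where bc: "(r1,r2) = (orb G act b', orb G act c)" "(b',c) \<in> U" using Upp_rep[OF v(2)] by blast
        have "(orb G act b, orb G act c) \<in> Upp G act U" using v(2) ab bc by auto
        hence u12: "(b,c) \<in> U" using Upp_m by blast
        have "(orb G act a, orb G act c) \<in> Upp G act U" using v(3) ab bc by auto
        hence u02: "(a,c) \<in> U" using Upp_m by blast
        have "discrete_curvature G Ad a b c = \<one>\<^bsub>G\<^esub>" using f U3I[OF ab(2) u12 u02] unfolding flat_def by auto
        hence eq: "sR (r0, r2) = atiyah_mult G act (sR (r0, r1)) (sR (r1, r2))"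
          using K[OF ab(2) u12 u02] ab bc by auto
        have tgt: "atiyah_tgt G act (sR (r0, r1)) = r1" using sR_split v unfolding atiyah_tgt_def by auto
        have src: "atiyah_src G act (sR (r1, r2)) = r1" using sR_split v unfolding atiyah_src_def by auto
        show "case p of (g1, g2) \<Rightarrow> (sR g1, sR g2) \<in> lg_dom (atiyah_lgpd G act (UmodG G act U)) \<and>
         sR (lg_mult (pair_lgpd (range (orb G act)) (Upp G act U)) g1 g2) =
         lg_mult (atiyah_lgpd G act (UmodG G act U)) (sR g1) (sR g2)"
          unfolding p using sR_into v eq[symmetric] tgt src by (simp add: pair_lgpd_def atiyah_lgpd_def)
      qed
    qed
  qed
qed

end
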